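(* For every $a \in \mathbb{N}$ and every integer $b \ge 2$, $R_\mathrm{ord}(S_a^\mathrm{sc}, C_b^\mathrm{mon}) = 1 + (a-1)(b-1)$.
   Context: All graphs are finite, simple and undirected, and a graph of order $n$ has vertex set $\{0,1,\ldots,n-1\}$; $K_n$ is the complete graph on $\{0,\ldots,n-1\}$. A $2$-edge-coloring of $K_n$ assigns each edge a color in $\{1,2\}$. For a graph $H$ and such a coloring, an embedding of $H$ in color $j$ is an injective map $\varphi\colon V(H)\to V(K_n)$ such that for every edge $uv$ of $H$ the edge $\{\varphi(u),\varphi(v)\}$ has color $j$; it is increasing if $\varphi(0)<\cdots<\varphi(|H|-1)$. The ordered Ramsey number $R_\mathrm{ord}(H_1,H_2)$ is the smallest $n$ such that every $2$-edge-coloring of $K_n$ admits an increasing embedding of $H_1$ in color $1$ or an increasing embedding of $H_2$ in color $2$. The start-central star $S_n^\mathrm{sc}$ is the graph of order $n$ whose edges are exactly $\{0,v\}$ for $1\le v\le n-1$. For $n\ge3$ the monotone cycle $C_n^\mathrm{mon}$ has edges $\{i,i+1\}$ ($0\le i\le n-2$) and $\{0,n-1\}$; by convention $C_2^\mathrm{mon}=K_2$. *)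

theory Defs
  imports Main
begin

text \<open>A graph of order n is a pair (n, E) with vertex set {0..<n} and edge set E,
  each edge a 2-element subset of {0..<n}.\<close>
type_synonym graph = "nat \<times> nat set set"

definition gorder :: "graph \<Rightarrow> nat" where "gorder H = fst H"
definition gedges :: "graph \<Rightarrow> nat set set" where "gedges H = snd H"

definition two_coloring :: "nat \<Rightarrow> (nat set \<Rightarrow> nat) \<Rightarrow> bool" where
  "two_coloring n c \<longleftrightarrow> (\<forall>e. e \<subseteq> {..<n} \<and> card e = 2 \<longrightarrow> c e \<in> {1,2})"

definition inc_embedding ::
  "nat \<Rightarrow> (nat set \<Rightarrow> nat) \<Rightarrow> graph \<Rightarrow> nat \<Rightarrow> (nat \<Rightarrow> nat) \<Rightarrow> bool" where
  "inc_embedding n c H j \<phi> \<longleftrightarrow>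
     strict_mono_on {..<gorder H} \<phi> \<and>
     \<phi> ` {..<gorder H} \<subseteq> {..<n} \<and>
     (\<forall>e\<in>gedges H. c (\<phi> ` e) = j)"

definition has_inc_embedding :: "nat \<Rightarrow> (nat set \<Rightarrow> nat) \<Rightarrow> graph \<Rightarrow> nat \<Rightarrow> bool" where
  "has_inc_embedding n c H j \<longleftrightarrow> (\<exists>\<phi>. inc_embedding n c H j \<phi>)"

definition ord_ramsey :: "graph \<Rightarrow> graph \<Rightarrow> nat" where
  "ord_ramsey H1 H2 = (LEAST n. \<forall>c. two_coloring n c \<longrightarrow>
      has_inc_embedding n c H1 1 \<or> has_inc_embedding n c H2 2)"

definition star_sc :: "nat \<Rightarrow> graph" where
  "star_sc n = (n, {{0, v} | v. 1 \<le> v \<and> v \<le> n - 1})"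

definition mon_cycle :: "nat \<Rightarrow> graph" where
  "mon_cycle n = (if n = 2 then (2, {{0, 1}})
     else (n, {{i, i + 1} | i. i + 2 \<le> n} \<union> {{0, n - 1}}))"

end

theory Submission
  imports Defs
begin

lemma star_emb:
  assumes "v < N" and "a - 1 \<le> card {w. v < w \<and> w < N \<and> c {v,w} = 1}" and "1 \<le> a"
  shows "has_inc_embedding N c (star_sc a) 1"
proof -
  define T where "T = {w. v < w \<and> w < N \<and> c {v,w} = 1}"
  have fT: "finite T" unfolding T_def by auto
  obtain T' where T': "T' \<subseteq> T" "card T' = a - 1"
    using obtain_subset_with_card_n[of "a-1" T] assms(2) unfolding T_def by blast
  have fT': "finite T'" using fT T' finite_subset by blast
  define xs where "xs = sorted_list_of_set T'"
  have len: "length xs = a - 1" using T' fT' xs_def by simp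
  have sx: "set xs = T'" using fT' xs_def by simp
  have srt: "sorted_wrt (<) xs" using xs_def by simp
  have inT: "i < a - 1 \<Longrightarrow> xs ! i \<in> T" for i
  proof -
    assume "i < a - 1"
    then have "xs ! i \<in> set xs" using len by simp
    then show "xs ! i \<in> T" using sx T'(1) by blast
  qed
  define \<phi> where "\<phi> i = (if i = 0 then v else xs ! (i - 1))" for i
  have "strict_mono_on {..<a} \<phi>"
  proof (rule strict_mono_onI)
    fix x y assume xy: "x \<in> {..<a}" "y \<in> {..<a}" "x < y"
    show "\<phi> x < \<phi> y"
    proof (cases "x = 0")
      case True
      then show ?thesis using inT[of "y-1"] xy unfolding \<phi>_def T_def by auto
    next
      case False
      then show ?thesis using sorted_wrt_nth_less[OF srt, of "x-1" "y-1"] xy len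
        unfolding \<phi>_def by auto
    qed
  qed
  moreover have "\<phi> ` {..<a} \<subseteq> {..<N}"
  proof
    fix y assume "y \<in> \<phi> ` {..<a}"
    then obtain x where x: "x < a" "y = \<phi> x" by auto
    then show "y \<in> {..<N}" using inT[of "x-1"] assms(1) unfolding \<phi>_def T_def
      by (cases "x = 0") auto
  qed
  moreover have "\<forall>e\<in>gedges (star_sc a). c (\<phi> ` e) = 1"
  proof
    fix e assume "e \<in> gedges (star_sc a)"
    then obtain u where u: "e = {0,u}" "1 \<le> u" "u \<le> a - 1"
      unfolding gedges_def star_sc_def by auto
    have "\<phi> ` e = {v, xs ! (u-1)}" using u unfolding \<phi>_def by auto
    then show "c (\<phi> ` e) = 1" using inT[of "u-1"] u unfolding T_def by auto
  qed
  moreover have "gorder (star_sc a) = a" unfolding gorder_def star_sc_def by simp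
  ultimately show ?thesis unfolding has_inc_embedding_def inc_embedding_def by metis
qed


lemma path_ex:
  assumes col: "two_coloring N c"
    and H: "\<forall>v<N. card {w. v < w \<and> w < N \<and> c {v,w} = 1} < a - 1"
  shows "S \<subseteq> {..<N} \<Longrightarrow> (a - 1) * j + 1 \<le> card S \<Longrightarrow>
    \<exists>p. strict_mono_on {..<Suc j} p \<and> p ` {..<Suc j} \<subseteq> S \<and>
        (\<forall>i. Suc i < Suc j \<longrightarrow> c {p i, p (Suc i)} = 2)"
proof (induction j arbitrary: S)
  case 0
  then obtain x where "x \<in> S" by fastforce
  then show ?case by (intro exI[of _ "\<lambda>_. x"]) (auto simp: strict_mono_on_def)
next
  case (Suc j)
  have fS: "finite S" using Suc.prems(1) finite_subset by blast
  have neS: "S \<noteq> {}" using Suc.prems(2) by auto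
  define v where "v = Min S"
  have vS: "v \<in> S" using fS neS v_def by simp
  have vmin: "w \<in> S \<Longrightarrow> v \<le> w" for w using fS v_def by simp
  have vN: "v < N" using vS Suc.prems(1) by auto
  define S' where "S' = {w \<in> S. v < w \<and> c {v,w} = 2}"
  define T where "T = {w. v < w \<and> w < N \<and> c {v,w} = 1}"
  have "S \<subseteq> {v} \<union> S' \<union> T"
  proof
    fix w assume w: "w \<in> S"
    show "w \<in> {v} \<union> S' \<union> T"
    proof (cases "w = v")
      case False
      then have vw: "v < w" using vmin[OF w] by simp
      have wN: "w < N" using w Suc.prems(1) by auto
      have "c {v,w} \<in> {1,2}" using col vw wN vN unfolding two_coloring_def by auto
      then show ?thesis using vw wN w unfolding S'_def T_def by auto
    qed simp
  qed
  moreover have "finite S'" "finite T" using fS unfolding S'_def T_def by auto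
  ultimately have "card S \<le> card ({v} \<union> S' \<union> T)" by (intro card_mono) auto
  also have "\<dots> \<le> card ({v} \<union> S') + card T" by (rule card_Un_le)
  also have "\<dots> \<le> 1 + card S' + card T" using card_Un_le[of "{v}" S'] by simp
  finally have c1: "card S \<le> 1 + card S' + card T" .
  have c2: "card T < a - 1" using H vN unfolding T_def by blast
  have "(a - 1) * j + 1 \<le> card S'" 
  proof -
    have "(a - 1) * Suc j = (a - 1) * j + (a - 1)" by simp
    then show ?thesis using c1 c2 Suc.prems(2) by linarith
  qed
  moreover have "S' \<subseteq> {..<N}" using Suc.prems(1) unfolding S'_def by auto
  ultimately obtain p' where p': "strict_mono_on {..<Suc j} p'" "p' ` {..<Suc j} \<subseteq> S'"
     "\<forall>i. Suc i < Suc j \<longrightarrow> c {p' i, p' (Suc i)} = 2" using Suc.IH by blast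
  have p'S: "i < Suc j \<Longrightarrow> p' i \<in> S'" for i using p'(2) by auto
  define p where "p i = (if i = 0 then v else p' (i - 1))" for i
  have "strict_mono_on {..<Suc (Suc j)} p"
  proof (rule strict_mono_onI)
    fix x y assume xy: "x \<in> {..<Suc (Suc j)}" "y \<in> {..<Suc (Suc j)}" "x < y"
    show "p x < p y"
    proof (cases "x = 0")
      case True
      then show ?thesis using p'S[of "y-1"] xy unfolding p_def S'_def by auto
    next
      case False
      have "x - 1 < y - 1" "x - 1 \<in> {..<Suc j}" "y - 1 \<in> {..<Suc j}" using xy False by auto
      then have "p' (x - 1) < p' (y - 1)" using p'(1) unfolding strict_mono_on_def by blast
      then show ?thesis using False xy unfolding p_def by auto
    qed
  qed
  moreover have "p ` {..<Suc (Suc j)} \<subseteq> S"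
  proof
    fix y assume "y \<in> p ` {..<Suc (Suc j)}"
    then obtain x where x: "x < Suc (Suc j)" "y = p x" by auto
    then show "y \<in> S" using p'S[of "x-1"] vS unfolding p_def S'_def
      by (cases "x = 0") auto
  qed
  moreover have "\<forall>i. Suc i < Suc (Suc j) \<longrightarrow> c {p i, p (Suc i)} = 2"
  proof (intro allI impI)
    fix i assume i: "Suc i < Suc (Suc j)"
    show "c {p i, p (Suc i)} = 2"
    proof (cases "i = 0")
      case True
      then show ?thesis using p'S[of 0] unfolding p_def S'_def by auto
    next
      case False
      then obtain i' where "i = Suc i'" using not0_implies_Suc by blast
      then show ?thesis using p'(3) i unfolding p_def by auto
    qed
  qed
  ultimately show ?case by blast
qed


lemma gorder_mc: "gorder (mon_cycle b) = b"
  unfolding gorder_def mon_cycle_def by simp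

lemma edge_mc: "i + 2 \<le> b \<Longrightarrow> {i, Suc i} \<in> gedges (mon_cycle b)"
  unfolding gedges_def mon_cycle_def by auto

lemma edges_mc: "2 \<le> b \<Longrightarrow> e \<in> gedges (mon_cycle b) \<Longrightarrow>
   (\<exists>i. i + 2 \<le> b \<and> e = {i, Suc i}) \<or> e = {0, b - 1}"
  unfolding gedges_def mon_cycle_def by (cases "b = 2") auto

lemma upper:
  assumes "1 \<le> a" "2 \<le> b" "N = 1 + (a - 1) * (b - 1)" "two_coloring N c"
  shows "has_inc_embedding N c (star_sc a) 1 \<or> has_inc_embedding N c (mon_cycle b) 2"
proof (cases "\<exists>v<N. a - 1 \<le> card {w. v < w \<and> w < N \<and> c {v,w} = 1}")
  case True
  then show ?thesis using star_emb assms(1) by blast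
next
  case False
  then have H: "\<forall>v<N. card {w. v < w \<and> w < N \<and> c {v,w} = 1} < a - 1" by auto
  define S0 where "S0 = {w. 0 < w \<and> w < N \<and> c {0,w} = 2}"
  define T0 where "T0 = {w. 0 < w \<and> w < N \<and> c {0,w} = 1}"
  have N0: "0 < N" using assms(3) by simp
  have "{0<..<N} \<subseteq> S0 \<union> T0"
  proof
    fix w assume w: "w \<in> {0<..<N}"
    have "c {0,w} \<in> {1,2}" using assms(4) w unfolding two_coloring_def by auto
    then show "w \<in> S0 \<union> T0" using w unfolding S0_def T0_def by auto
  qed
  moreover have "finite S0" "finite T0" unfolding S0_def T0_def by auto
  ultimately have "card {0<..<N} \<le> card (S0 \<union> T0)" by (intro card_mono) auto
  also have "\<dots> \<le> card S0 + card T0" by (rule card_Un_le)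
  finally have c1: "N - 1 \<le> card S0 + card T0" by simp
  have c2: "card T0 < a - 1" using H N0 unfolding T0_def by blast
  define j where "j = b - 2"
  have bj: "b = Suc (Suc j)" using assms(2) j_def by simp
  have "(a - 1) * j + 1 \<le> card S0"
  proof -
    have "(a - 1) * (b - 1) = (a - 1) * j + (a - 1)" using bj by simp
    then show ?thesis using c1 c2 assms(3) by linarith
  qed
  moreover have "S0 \<subseteq> {..<N}" unfolding S0_def by auto
  ultimately obtain p where p: "strict_mono_on {..<Suc j} p" "p ` {..<Suc j} \<subseteq> S0"
     "\<forall>i. Suc i < Suc j \<longrightarrow> c {p i, p (Suc i)} = 2"
    using path_ex[OF assms(4) H] by blast
  have pS: "i < Suc j \<Longrightarrow> p i \<in> S0" for i using p(2) by auto
  define \<phi> where "\<phi> i = (if i = 0 then 0 else p (i - 1))" for i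
  have "strict_mono_on {..<b} \<phi>"
  proof (rule strict_mono_onI)
    fix x y assume xy: "x \<in> {..<b}" "y \<in> {..<b}" "x < y"
    show "\<phi> x < \<phi> y"
    proof (cases "x = 0")
      case True
      then show ?thesis using pS[of "y-1"] xy bj unfolding \<phi>_def S0_def by auto
    next
      case False
      have "x - 1 < y - 1" "x - 1 \<in> {..<Suc j}" "y - 1 \<in> {..<Suc j}" using xy False bj by auto
      then have "p (x - 1) < p (y - 1)" using p(1) unfolding strict_mono_on_def by blast
      then show ?thesis using False xy unfolding \<phi>_def by auto
    qed
  qed
  moreover have "\<phi> ` {..<b} \<subseteq> {..<N}"
  proof
    fix y assume "y \<in> \<phi> ` {..<b}"
    then obtain x where x: "x < b" "y = \<phi> x" by auto
    then show "y \<in> {..<N}" using pS[of "x-1"] N0 bj unfolding \<phi>_def S0_def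
      by (cases "x = 0") auto
  qed
  moreover have "\<forall>e\<in>gedges (mon_cycle b). c (\<phi> ` e) = 2"
  proof
    fix e assume "e \<in> gedges (mon_cycle b)"
    then have "(\<exists>i. i + 2 \<le> b \<and> e = {i, Suc i}) \<or> e = {0, b - 1}" using edges_mc assms(2) by blast
    then show "c (\<phi> ` e) = 2"
    proof
      assume "\<exists>i. i + 2 \<le> b \<and> e = {i, Suc i}"
      then obtain i where i: "i + 2 \<le> b" "e = {i, Suc i}" by blast
      show ?thesis
      proof (cases "i = 0")
        case True
        have "\<phi> ` e = {0, p 0}" using True i by (simp add: \<phi>_def insert_commute)
        moreover have "c {0, p 0} = 2" using pS[of 0] unfolding S0_def by simp
        ultimately show ?thesis by simp
      next
        case False
        then obtain i' where i': "i = Suc i'" using not0_implies_Suc by blast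
        then have "c {p i', p (Suc i')} = 2" using p(3) i bj by auto
        moreover have "\<phi> ` e = {p i', p (Suc i')}" using i i' by (simp add: \<phi>_def)
        ultimately show ?thesis by simp
      qed
    next
      assume e: "e = {0, b - 1}"
      have "\<phi> ` e = {0, p j}" using e bj by (simp add: \<phi>_def insert_commute)
      moreover have "c {0, p j} = 2" using pS[of j] unfolding S0_def by simp
      ultimately show ?thesis by simp
    qed
  qed
  ultimately show ?thesis unfolding has_inc_embedding_def inc_embedding_def gorder_mc by blast
qed


lemma sm_ge:
  assumes "strict_mono_on {..<n} (\<phi> :: nat \<Rightarrow> nat)"
  shows "i < n \<Longrightarrow> \<phi> 0 + i \<le> \<phi> i"
proof (induction i)
  case (Suc i)
  have "\<phi> i < \<phi> (Suc i)" using assms Suc.prems unfolding strict_mono_on_def by simp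
  then show ?case using Suc by simp
qed simp

lemma card2_eq1: "card {x, y :: nat} = 1 \<Longrightarrow> x = y"
  by (cases "x = y") auto

lemma lower:
  assumes "2 \<le> a" "2 \<le> b" "m \<le> (a - 1) * (b - 1)"
  shows "\<exists>c. two_coloring m c \<and> \<not> has_inc_embedding m c (star_sc a) 1
           \<and> \<not> has_inc_embedding m c (mon_cycle b) 2"
proof -
  define k where "k = a - 1"
  have k0: "0 < k" using assms k_def by simp
  define P where "P e \<longleftrightarrow> (\<exists>q. (\<lambda>x. x div k) ` e = {q})" for e
  define c where "c e = (if P e then 1 else (2::nat))" for e
  have "c e \<in> {1,2}" for e unfolding c_def by simp
  then have col: "two_coloring m c" unfolding two_coloring_def by blast
  have c1: "c {x, y} = 1 \<Longrightarrow> x div k = y div k" for x y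
  proof -
    assume "c {x, y} = 1"
    then have "P {x, y}" unfolding c_def by (cases "P {x, y}") simp_all
    then obtain q where "{x div k, y div k} = {q}" unfolding P_def by auto
    then show ?thesis by (metis insertCI singletonD)
  qed
  have c2: "c {x, y} = 2 \<Longrightarrow> x div k \<noteq> y div k" for x y
  proof
    assume "c {x, y} = 2" "x div k = y div k"
    then have "(\<lambda>x. x div k) ` {x, y} = {x div k}" by simp
    then have "P {x, y}" unfolding P_def by blast
    then show False using \<open>c {x, y} = 2\<close> unfolding c_def by simp
  qed
  have ns: "\<not> has_inc_embedding m c (star_sc a) 1"
  proof
    assume "has_inc_embedding m c (star_sc a) 1"
    then obtain \<phi> where sm: "strict_mono_on {..<a} \<phi>"
        and ed: "\<forall>e\<in>gedges (star_sc a). c (\<phi> ` e) = 1"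
      unfolding has_inc_embedding_def inc_embedding_def gorder_def star_sc_def by auto
    have "{0, k} \<in> gedges (star_sc a)" unfolding gedges_def star_sc_def k_def using assms by auto
    then have "c (\<phi> ` {0, k}) = 1" using ed by blast
    then have "c {\<phi> 0, \<phi> k} = 1" by simp
    then have eq: "\<phi> 0 div k = \<phi> k div k" by (rule c1)
    have "\<phi> 0 + k \<le> \<phi> k" using sm_ge[OF sm, of k] k_def assms by simp
    then have "(\<phi> 0 + k) div k \<le> \<phi> k div k" by (rule div_le_mono)
    moreover have "(\<phi> 0 + k) div k = \<phi> 0 div k + 1" using k0 by (simp add: div_add_self2)
    ultimately show False using eq by simp
  qed
  have nc: "\<not> has_inc_embedding m c (mon_cycle b) 2"
  proof
    assume "has_inc_embedding m c (mon_cycle b) 2"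
    then obtain \<phi> where sm: "strict_mono_on {..<b} \<phi>" and im: "\<phi> ` {..<b} \<subseteq> {..<m}"
        and ed: "\<forall>e\<in>gedges (mon_cycle b). c (\<phi> ` e) = 2"
      unfolding has_inc_embedding_def inc_embedding_def gorder_mc by auto
    have ind: "i < b \<Longrightarrow> i \<le> \<phi> i div k" for i
    proof (induction i)
      case (Suc i)
      have "{i, Suc i} \<in> gedges (mon_cycle b)" using Suc.prems by (intro edge_mc) simp
      then have "c (\<phi> ` {i, Suc i}) = 2" using ed by blast
      then have "c {\<phi> i, \<phi> (Suc i)} = 2" by simp
      then have ne: "\<phi> i div k \<noteq> \<phi> (Suc i) div k" by (rule c2)
      have "\<phi> i < \<phi> (Suc i)" using sm Suc.prems unfolding strict_mono_on_def by simp
      then have "\<phi> i div k \<le> \<phi> (Suc i) div k" by (simp add: div_le_mono)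
      then show ?case using ne Suc by simp
    qed simp
    have bl: "b - 1 < b" using assms by simp
    have "\<phi> (b - 1) < m" using im bl by auto
    then have "\<phi> (b - 1) < (b - 1) * k" using assms k_def by (simp add: mult.commute)
    then have "\<phi> (b - 1) div k < b - 1" by (rule less_mult_imp_div_less)
    then show False using ind[OF bl] by simp
  qed
  show ?thesis using col ns nc by blast
qed

lemma empty_emb: "has_inc_embedding 0 c H j \<Longrightarrow> gorder H = 0"
  unfolding has_inc_embedding_def inc_embedding_def by auto

theorem theorem4p18:
  fixes a b :: nat
  assumes "1 \<le> a" and "2 \<le> b"
  shows "ord_ramsey (star_sc a) (mon_cycle b) = 1 + (a - 1) * (b - 1)"
  unfolding ord_ramsey_def
proof (rule Least_equality)
  show "\<forall>c. two_coloring (1 + (a - 1) * (b - 1)) c \<longrightarrow>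
      has_inc_embedding (1 + (a - 1) * (b - 1)) c (star_sc a) 1 \<or>
      has_inc_embedding (1 + (a - 1) * (b - 1)) c (mon_cycle b) 2"
    using upper[OF assms] by blast
next
  fix m
  assume P: "\<forall>c. two_coloring m c \<longrightarrow> has_inc_embedding m c (star_sc a) 1 \<or>
      has_inc_embedding m c (mon_cycle b) 2"
  show "1 + (a - 1) * (b - 1) \<le> m"
  proof (rule ccontr)
    assume "\<not> 1 + (a - 1) * (b - 1) \<le> m"
    then have mle: "m \<le> (a - 1) * (b - 1)" by simp
    show False
    proof (cases "a = 1")
      case True
      then have "m = 0" using mle by simp
      moreover have "two_coloring 0 (\<lambda>_. 1)" unfolding two_coloring_def by auto
      ultimately have "has_inc_embedding 0 (\<lambda>_. 1) (star_sc a) 1 \<or>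
          has_inc_embedding 0 (\<lambda>_. 1) (mon_cycle b) 2" using P by blast
      moreover have "gorder (star_sc a) \<noteq> 0" using assms unfolding gorder_def star_sc_def by simp
      moreover have "gorder (mon_cycle b) \<noteq> 0" using assms gorder_mc[of b] by simp
      ultimately show False using empty_emb[of "\<lambda>_. 1" "star_sc a" 1] empty_emb[of "\<lambda>_. 1" "mon_cycle b" 2]
        by argo
    next
      case False
      then obtain c where "two_coloring m c" "\<not> has_inc_embedding m c (star_sc a) 1"
           "\<not> has_inc_embedding m c (mon_cycle b) 2"
      proof -
        have "2 \<le> a" using False assms(1) by simp
        then show ?thesis using lower[OF _ assms(2) mle] that by blast
      qed
      then show False using P by blast
    qed
  qed
qed

end
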